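(* The representation $\rho$ in the following setting is reducible if and only if $w\ne-2$. Setting: $q$ a root of unity with $n$ odd and $q^4\ne1$ ($N=n$ odd), $\bar N=(N-1)/2$, $k\in\mathbb Z$, $w=-q^{2k}-q^{-2k}$; $V$ has basis $\{u_i:-\bar N\le i\le\bar N\}$, with $u^*_i=u_{-\bar N}$ for $i<-\bar N$, $u^*_i=u_i$ for $|i|\le\bar N$, $u^*_i=u_{\bar N}$ for $i>\bar N$; $\lambda_i=q^{2i}+q^{-2i}$, and for $i\ne0$: $s_i=\frac{q^{2i-k+1}-q^{-2i+k-1}}{q^{2i}-q^{-2i}}$, $s'_i=\frac{q^{2i+2}-q^{-2i-2}}{q^{2i}-q^{-2i}}s_i$, $\beta_i=\frac{2q^{k-1}-2q^{-k+1}}{(q^{2i}-q^{-2i})^3}$; $\rho$ is the representation of $\mathcal S_q(\Sigma_{1,1})$ with $\rho(\alpha_0)u_i=\lambda_iu_i$ ($-\bar N\le i\le0$), $\rho(\alpha_0)u_i=\lambda_iu_i+u_{-i}$ ($0<i\le\bar N$), $\rho(\alpha_\infty)u_i=s_iu_{i+1}+s_{-i}u^*_{i-1}$ ($-\bar N\le i<0$), $\rho(\alpha_\infty)u_0=(q^{k-1}+q^{-k+1})u_{-1}+(q^2-q^{-2})(q^{-k+1}-q^{k-1})u_1$, $\rho(\alpha_\infty)u_i=\beta_iu^*_{-i-1}-\beta_iu_{-i+1}+s'_{-i}u_{i-1}+s'_iu^*_{i+1}$ ($0<i\le\bar N$).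
   Context: $\mathcal S_q(\Sigma_{1,1})$ is the Kauffman bracket skein algebra of the one-punctured torus, generated by the slope $0,1,\infty$ curves $\alpha_0,\alpha_1,\alpha_\infty$; when $q^4\ne1$ a representation is determined by the images of $\alpha_0$ and $\alpha_\infty$. For $q$ a root of unity, $n=\mathrm{ord}(q^2)$ and $N=\mathrm{ord}(q^4)$. (The formulas above are known to define a representation.) *)

theory Defs
  imports Complex_Main
begin

definition mult_ord :: "complex \<Rightarrow> nat" where
  "mult_ord z = (LEAST m. m > 0 \<and> z ^ m = 1)"

(* Vectors of V are functions int => complex supported on {-Nb..Nb};
   u_i is the standard basis vector *)
definition ub :: "int \<Rightarrow> int \<Rightarrow> complex" where
  "ub i = (\<lambda>j. if j = i then 1 else 0)"

definition ustar :: "int \<Rightarrow> int \<Rightarrow> int \<Rightarrow> complex" where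
  "ustar Nb i = ub (if i < - Nb then - Nb else if i > Nb then Nb else i)"

definition Vsp :: "int \<Rightarrow> (int \<Rightarrow> complex) set" where
  "Vsp Nb = {v. \<forall>j. (j < - Nb \<or> j > Nb) \<longrightarrow> v j = 0}"

(* the linear operator determined by the images img i of the basis vectors u_i *)
definition lin_op :: "int \<Rightarrow> (int \<Rightarrow> int \<Rightarrow> complex) \<Rightarrow> (int \<Rightarrow> complex) \<Rightarrow> (int \<Rightarrow> complex)" where
  "lin_op Nb img v = (\<lambda>j. \<Sum>i\<in>{-Nb..Nb}. v i * img i j)"

definition lam :: "complex \<Rightarrow> int \<Rightarrow> complex" where
  "lam q i = q powi (2*i) + q powi (-2*i)"

definition sc :: "complex \<Rightarrow> int \<Rightarrow> int \<Rightarrow> complex" where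
  "sc q k i = (q powi (2*i - k + 1) - q powi (-2*i + k - 1)) / (q powi (2*i) - q powi (-2*i))"

definition sc' :: "complex \<Rightarrow> int \<Rightarrow> int \<Rightarrow> complex" where
  "sc' q k i = (q powi (2*i + 2) - q powi (-2*i - 2)) / (q powi (2*i) - q powi (-2*i)) * sc q k i"

definition beta :: "complex \<Rightarrow> int \<Rightarrow> int \<Rightarrow> complex" where
  "beta q k i = (2 * q powi (k - 1) - 2 * q powi (-k + 1)) / (q powi (2*i) - q powi (-2*i)) ^ 3"

definition rho0_img :: "complex \<Rightarrow> int \<Rightarrow> int \<Rightarrow> complex" where
  "rho0_img q i =
     (if i \<le> 0 then (\<lambda>j. lam q i * ub i j)
      else (\<lambda>j. lam q i * ub i j + ub (-i) j))"

definition rhoInf_img :: "complex \<Rightarrow> int \<Rightarrow> int \<Rightarrow> int \<Rightarrow> int \<Rightarrow> complex" where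
  "rhoInf_img q k Nb i =
     (if i < 0 then (\<lambda>j. sc q k i * ub (i + 1) j + sc q k (-i) * ustar Nb (i - 1) j)
      else if i = 0 then (\<lambda>j. (q powi (k - 1) + q powi (-k + 1)) * ub (-1) j
                + (q powi 2 - q powi (-2)) * (q powi (-k + 1) - q powi (k - 1)) * ub 1 j)
      else (\<lambda>j. beta q k i * ustar Nb (-i - 1) j - beta q k i * ub (-i + 1) j
                + sc' q k (-i) * ub (i - 1) j + sc' q k i * ustar Nb (i + 1) j))"

definition is_lin_subspace :: "(int \<Rightarrow> complex) set \<Rightarrow> bool" where
  "is_lin_subspace W \<longleftrightarrow> (\<lambda>j. 0) \<in> W \<and> (\<forall>v\<in>W. \<forall>w\<in>W. (\<lambda>j. v j + w j) \<in> W)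
     \<and> (\<forall>c. \<forall>v\<in>W. (\<lambda>j. c * v j) \<in> W)"

(* reducibility: a nonzero proper subspace of V invariant under rho(alpha_0) and rho(alpha_infinity)
   (hence under the whole image of the skein algebra, since these generate it when q^4 \<noteq> 1) *)
definition reducible_rep :: "int \<Rightarrow> (int \<Rightarrow> int \<Rightarrow> complex) \<Rightarrow> (int \<Rightarrow> int \<Rightarrow> complex) \<Rightarrow> bool" where
  "reducible_rep Nb A B \<longleftrightarrow> (\<exists>W. W \<subseteq> Vsp Nb \<and> is_lin_subspace W \<and> W \<noteq> {\<lambda>j. 0} \<and> W \<noteq> Vsp Nb
      \<and> (\<forall>v\<in>W. lin_op Nb A v \<in> W) \<and> (\<forall>v\<in>W. lin_op Nb B v \<in> W))"

end

theory Submission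
  imports Defs
begin


lemma mo:
  assumes "\<exists>m>0. z^m = (1::complex)"
  shows "mult_ord z > 0" "z ^ mult_ord z = 1" "\<And>j. 0<j \<Longrightarrow> j < mult_ord z \<Longrightarrow> z^j \<noteq> 1"
proof -
  have "mult_ord z > 0 \<and> z ^ mult_ord z = 1" unfolding mult_ord_def
    using LeastI_ex[where P="\<lambda>m. m>0 \<and> z^m=1"] assms by blast
  then show "mult_ord z > 0" "z ^ mult_ord z = 1" by auto
  show "\<And>j. 0<j \<Longrightarrow> j < mult_ord z \<Longrightarrow> z^j \<noteq> 1"
    using not_less_Least[where P="\<lambda>m. m>0 \<and> z^m=1"] unfolding mult_ord_def by blast
qed

lemma zord_gen:
  assumes "(z::complex) ^ N = 1" "N > 0" "\<And>j. 0<j \<Longrightarrow> j<N \<Longrightarrow> z^j \<noteq> 1"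
  shows "z powi e = 1 \<longleftrightarrow> int N dvd e"
proof -
  have z0: "z \<noteq> 0" using assms(1,2) by (metis power_0_left zero_neq_one not_gr0)
  have e: "e = int N * (e div int N) + e mod int N" by simp
  have "z powi e = (z powi (int N)) powi (e div int N) * z powi (e mod int N)"
    by (subst e, subst power_int_add) (simp_all add: z0 power_int_mult)
  also have "\<dots> = z ^ nat (e mod int N)" using assms(1,2) by (simp add: power_int_nonneg_exp[of "e mod int N"])
  finally have E: "z powi e = z ^ nat (e mod int N)" .
  have lt: "nat (e mod int N) < N" using assms(2) by (simp add: nat_less_iff)
  show ?thesis
  proof
    assume "z powi e = 1"
    then have "nat (e mod int N) = 0" using E lt assms(3) by (metis not_gr0)
    then show "int N dvd e" using assms(2) by (metis dvd_eq_mod_eq_0 nat_0_iff order.eq_iff pos_mod_sign of_nat_0_less_iff)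
  next
    assume "int N dvd e" then show "z powi e = 1" using E by simp
  qed
qed

locale qset =
  fixes q :: complex and N :: nat and Nb :: int
  assumes qnz: "q \<noteq> 0" and Nodd: "odd N" and N3: "N \<ge> 3" and Nb: "2*Nb = int N - 1"
  and zord: "\<And>e. (q^2) powi e = 1 \<longleftrightarrow> int N dvd e"

lemma q_setup:
  fixes q :: complex and n N :: nat and Nb :: int
  assumes "\<exists>m>0. q ^ m = (1::complex)"
    and "n = mult_ord (q ^ 2)" and "N = mult_ord (q ^ 4)"
    and "odd n" and "q ^ 4 \<noteq> 1"
    and "Nb = (int N - 1) div 2"
  shows "qset q N Nb"
proof -
  obtain m where m: "m > 0" "q^m = 1" using assms(1) by blast
  have q0: "q \<noteq> 0" using m by (metis power_0_left zero_neq_one not_gr0)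
  have e2: "\<exists>m>0. (q^2)^m = (1::complex)" using m by (metis power_mult_distrib power_one mult.commute power_mult)
  have e4: "\<exists>m>0. (q^4)^m = (1::complex)" using m by (metis power_one mult.commute power_mult)
  note n = mo[OF e2, folded assms(2)]
  note NN = mo[OF e4, folded assms(3)]
  have "(q^4)^n = 1" using n(2) by (metis power_mult mult.commute power_one num_double numeral_times_numeral mult_2 power_add)
  hence "N \<le> n" using NN(3) n(1) by (meson not_le)
  have z2N: "(q^2)^(2*N) = 1" using NN(2) by (simp add: power_mult[symmetric])
  obtain r where r: "n = 2*r+1" using assms(4) oddE by blast
  have "(q^2)^(N*n) = 1" using n(2) by (metis power_mult mult.commute power_one)
  moreover have "(q^2)^(N*n) = (q^2)^N * ((q^2)^(2*N))^r"
    by (simp add: r power_add power_mult[symmetric] algebra_simps)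
  ultimately have zN: "(q^2)^N = 1" using z2N by simp
  hence "n \<le> N" using n(3) NN(1) by (meson not_le)
  hence nN: "N = n" using \<open>N \<le> n\<close> by simp
  have "N \<noteq> 1" using NN(2) assms(5) by auto
  hence N3: "N \<ge> 3" using nN assms(4) NN(1) by presburger
  show ?thesis
  proof
    show "q \<noteq> 0" by fact
    show "odd N" using nN assms(4) by simp
    show "N \<ge> 3" by fact
    show "2*Nb = int N - 1" using assms(6) \<open>odd N\<close> by (simp add: nN)
    show "\<And>e. (q^2) powi e = 1 \<longleftrightarrow> int N dvd e"
      by (rule zord_gen[OF zN NN(1)]) (use n(3) nN in auto)
  qed
qed



lemma dvd_small: "int N dvd (d::int) \<Longrightarrow> \<bar>d\<bar> < int N \<Longrightarrow> d = 0"
  by (metis dvd_imp_le_int abs_ge_self leD less_le_trans)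

lemma inv_sq: "(a::complex) \<noteq> 0 \<Longrightarrow> a = inverse a \<longleftrightarrow> a*a = 1"
  by (metis inverse_unique right_inverse)

lemma negsum: "(-(a::complex) - b = -2) = (a + b = 2)"
proof -
  have e: "-a - b = -(a+b)" by simp
  show ?thesis unfolding e neg_equal_iff_equal ..
qed

context qset begin

lemma Nb1: "Nb \<ge> 1" "int N = 2*Nb+1" using N3 Nb by auto

lemma pw2: "q powi (2*e) = (q^2) powi e"
  by (simp add: power_int_mult)

lemma negeq: "q powi e = q powi (-e) \<longleftrightarrow> int N dvd e"
proof -
  have a0: "q powi e \<noteq> 0" using qnz by simp
  have "q powi e = q powi (-e) \<longleftrightarrow> q powi e = inverse (q powi e)" by (simp add: power_int_minus)
  also have "\<dots> \<longleftrightarrow> q powi e * q powi e = 1" using a0 inv_sq by blast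
  also have "q powi e * q powi e = q powi (2*e)"
    unfolding mult_2 using qnz by (intro power_int_add[symmetric]) simp
  finally show ?thesis using zord pw2 by simp
qed

lemma lam_z: "lam q a = (q^2) powi a + (q^2) powi (-a)"
  unfolding lam_def using pw2[of a] pw2[of "-a"] by simp

lemma lam_neg: "lam q (-a) = lam q a"
  unfolding lam_z by simp

lemma lam_inj:
  assumes "-Nb \<le> a" "a \<le> Nb" "-Nb \<le> b" "b \<le> Nb" "lam q a = lam q b"
  shows "a = b \<or> a = -b"
proof -
  define z where "z = q^2"
  have z0: "z \<noteq> 0" using qnz z_def by simp
  define x where "x = z powi a"
  define y where "y = z powi b"
  have x0: "x \<noteq> 0" and y0: "y \<noteq> 0" using z0 x_def y_def by auto
  have "x + inverse x = y + inverse y" using assms(5) unfolding lam_z x_def y_def z_def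
    by (simp add: power_int_minus)
  hence "(x - y) * (x*y - 1) = 0" using x0 y0 by (simp add: field_simps)
  hence "x = y \<or> x * y = 1" by auto
  thus ?thesis
  proof
    assume "x = y"
    hence "z powi (a - b) = 1" using z0 x0 y0 power_int_diff[of z a b] by (simp add: x_def y_def)
    hence "int N dvd (a-b)" using zord z_def by simp
    hence "a - b = 0" using dvd_small[of N "a-b"] assms Nb1 by linarith
    thus ?thesis by simp
  next
    assume "x * y = 1"
    hence "z powi (a + b) = 1" using z0 power_int_add[of z a b] by (simp add: x_def y_def)
    hence "int N dvd (a+b)" using zord z_def by simp
    hence "a + b = 0" using dvd_small[of N "a+b"] assms Nb1 by linarith
    thus ?thesis by simp
  qed
qed

lemma w_iff: "(- (q powi (2*k)) - q powi (-2*k) = -2) \<longleftrightarrow> int N dvd k"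
proof -
  define x where "x = (q^2) powi k"
  have x0: "x \<noteq> 0" using qnz x_def by simp
  have a: "q powi (2*k) = x" using pw2[of k] x_def by simp
  have b: "q powi (-2*k) = inverse x" using pw2[of "-k"] x_def by (simp add: power_int_minus)
  have "(- (q powi (2*k)) - q powi (-2*k) = -2) \<longleftrightarrow> x + inverse x = 2"
    unfolding a b by (rule negsum)
  also have "\<dots> \<longleftrightarrow> x = 1"
  proof
    assume h: "x + inverse x = 2"
    have "x * (x + inverse x) = x * x + 1" using x0 by (simp add: distrib_left)
    hence "x * x + 1 = 2 * x" using h by (simp add: mult.commute)
    hence "(x - 1) * (x - 1) = 0" by (simp add: algebra_simps)
    thus "x = 1" by simp
  qed simp
  finally show ?thesis using zord x_def by simp
qed

end


lemma lin_op_ub: "-Nb \<le> i \<Longrightarrow> i \<le> Nb \<Longrightarrow> lin_op Nb img (ub i) = img i"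
proof (rule ext)
  fix j assume "-Nb \<le> i" "i \<le> Nb"
  have "lin_op Nb img (ub i) j = (\<Sum>l\<in>{-Nb..Nb}. if l = i then img i j else 0)"
    unfolding lin_op_def ub_def by (rule sum.cong) auto
  also have "\<dots> = img i j" using \<open>-Nb \<le> i\<close> \<open>i \<le> Nb\<close> by (simp add: sum.delta')
  finally show "lin_op Nb img (ub i) j = img i j" .
qed

lemma lin_op_comb: "lin_op Nb img (\<lambda>j. c * v j + d * w j) = (\<lambda>j. c * lin_op Nb img v j + d * lin_op Nb img w j)"
  by (rule ext) (simp add: lin_op_def sum.distrib sum_distrib_left algebra_simps)

lemma sub_comb: "is_lin_subspace W \<Longrightarrow> v\<in>W \<Longrightarrow> w\<in>W \<Longrightarrow> (\<lambda>j. c * v j + d * w j) \<in> W"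
  unfolding is_lin_subspace_def by metis

lemma sub_smult: "is_lin_subspace W \<Longrightarrow> v\<in>W \<Longrightarrow> (\<lambda>j. c * v j) \<in> W"
  unfolding is_lin_subspace_def by metis

lemma sub_comb4: "is_lin_subspace W \<Longrightarrow> v1\<in>W \<Longrightarrow> v2\<in>W \<Longrightarrow> v3\<in>W \<Longrightarrow> v4\<in>W \<Longrightarrow>
   (\<lambda>j. a * v1 j + b * v2 j + c * v3 j + d * v4 j) \<in> W"
proof -
  assume W: "is_lin_subspace W" "v1\<in>W" "v2\<in>W" "v3\<in>W" "v4\<in>W"
  have "(\<lambda>j. a * v1 j + b * v2 j) \<in> W" using W sub_comb by blast
  hence "(\<lambda>j. 1 * (a * v1 j + b * v2 j) + c * v3 j) \<in> W" using W sub_comb[of W "\<lambda>j. a * v1 j + b * v2 j" v3] by blast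
  hence "(\<lambda>j. 1 * (1 * (a * v1 j + b * v2 j) + c * v3 j) + d * v4 j) \<in> W"
    using W sub_comb[of W "\<lambda>j. 1 * (a * v1 j + b * v2 j) + c * v3 j" v4] by blast
  thus ?thesis by simp
qed

lemma sub_sum: assumes W: "is_lin_subspace W" shows "finite S \<Longrightarrow> (\<forall>i\<in>S. f i \<in> W) \<Longrightarrow> (\<lambda>j. \<Sum>i\<in>S. c i * f i j) \<in> W"
proof (induction S rule: finite_induct)
  case empty thus ?case using W by (simp add: is_lin_subspace_def)
next
  case (insert x F)
  have "(\<lambda>j. 1 * (\<Sum>i\<in>F. c i * f i j) + c x * f x j) \<in> W"
    using insert W sub_comb[of W "\<lambda>j. \<Sum>i\<in>F. c i * f i j" "f x"] by blast
  thus ?case using insert by (simp add: add.commute)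
qed

lemma Vsp_decomp: assumes "v \<in> Vsp Nb" shows "v = (\<lambda>j. \<Sum>i\<in>{-Nb..Nb}. v i * ub i j)"
proof (rule ext)
  fix j
  have "(\<Sum>i\<in>{-Nb..Nb}. v i * ub i j) = (\<Sum>i\<in>{-Nb..Nb}. if i = j then v j else 0)"
    unfolding ub_def by (rule sum.cong) auto
  also have "\<dots> = v j" using assms by (auto simp: sum.delta' Vsp_def)
  finally show "v j = (\<Sum>i\<in>{-Nb..Nb}. v i * ub i j)" by simp
qed

lemma rho0_formula:
  "lin_op Nb (rho0_img q) x j = (if -Nb \<le> j \<and> j \<le> Nb then lam q j * x j + (if j < 0 then x (-j) else 0) else 0)"
proof -
  have r: "\<And>i. rho0_img q i j = (if i = j then lam q i else 0) + (if i = -j \<and> 0 < i then 1 else 0)"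
    by (auto simp: rho0_img_def ub_def)
  have "lin_op Nb (rho0_img q) x j = (\<Sum>i\<in>{-Nb..Nb}. (if i = j then x i * lam q i else 0))
        + (\<Sum>i\<in>{-Nb..Nb}. (if i = -j then (if 0 < i then x i else 0) else 0))"
    unfolding lin_op_def r distrib_left sum.distrib by (intro arg_cong2[where f="(+)"] sum.cong) auto
  also have "\<dots> = (if -Nb \<le> j \<and> j \<le> Nb then lam q j * x j + (if j < 0 then x (-j) else 0) else 0)"
    by (simp add: sum.delta' mult.commute)
  finally show ?thesis .
qed



context qset begin

lemma exists_m:
  assumes "\<not> int N dvd k"
  shows "\<exists>m. -Nb \<le> m \<and> m < Nb \<and> int N dvd (2*m - k + 1)"
proof -
  define m0 where "m0 = (k-1)*(Nb+1)"
  define d where "d = (m0 + Nb) div int N"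
  define m where "m = (m0 + Nb) mod int N - Nb"
  have NN: "int N = 2*Nb+1" "Nb \<ge> 1" using Nb1 by auto
  have md: "(m0 + Nb) mod int N = m0 + Nb - int N * d"
    using div_mult_mod_eq[of "m0+Nb" "int N"] by (simp add: d_def algebra_simps)
  have Npos: "int N > 0" using NN by simp
  have r1: "0 \<le> (m0 + Nb) mod int N" "(m0 + Nb) mod int N < int N"
    by (rule pos_mod_sign[OF Npos]) (rule pos_mod_bound[OF Npos])
  have "2*m - k + 1 = 2*(m0 + Nb - int N * d - Nb) - k + 1" unfolding m_def md by simp
  also have "\<dots> = int N * (k - 1 - 2*d)" unfolding m0_def using NN(1) by (simp add: algebra_simps)
  finally have e: "2*m - k + 1 = int N * (k - 1 - 2*d)" .
  have "m \<noteq> Nb"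
  proof
    assume "m = Nb"
    hence "2*m - k + 1 = int N - k" using NN by simp
    hence "int N - k = int N * (k - 1 - 2*d)" using e by simp
    hence "int N dvd (int N - k)" by (metis dvd_triv_left)
    hence "int N dvd k" by (simp add: dvd_diff_right_iff)
    thus False using assms by simp
  qed
  have r2: "(m0+Nb) mod int N \<le> 2*Nb" using r1(2) NN(1) by linarith
  moreover have "-Nb \<le> m" "m \<le> Nb" unfolding m_def using r1(1) r2 by linarith+
  ultimately show ?thesis using e \<open>m \<noteq> Nb\<close> by (intro exI[of _ m]) auto
qed

lemma sc_zero: "int N dvd (2*m - k + 1) \<Longrightarrow> sc q k m = 0"
proof -
  assume h: "int N dvd (2*m - k + 1)"
  have "q powi (2*m - k + 1) = q powi (-(2*m - k + 1))" using negeq h by blast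
  also have "-(2*m - k + 1) = -2*m+k-1" by simp
  finally have "q powi (2*m - k + 1) = q powi (-2*m+k-1)" .
  thus ?thesis by (simp add: sc_def)
qed

lemma c2_zero: "int N dvd (-k+1) \<Longrightarrow> (q powi (-k + 1) - q powi (k - 1)) = 0"
proof -
  assume h: "int N dvd (-k+1)"
  have "q powi (-k+1) = q powi (-(-k+1))" using negeq h by blast
  also have "-(-k+1) = k - 1" by simp
  finally have "q powi (-k+1) = q powi (k - 1)" .
  thus ?thesis by simp
qed

lemma rho0_zero:
  assumes "-Nb \<le> i" "i \<le> m" "m \<le> Nb" "j < -Nb \<or> j > m"
  shows "rho0_img q i j = 0"
  using assms by (auto simp: rho0_img_def ub_def)

lemma rhoInf_zero:
  assumes "-Nb \<le> i" "i \<le> m" "m < Nb" "int N dvd (2*m - k + 1)" "j < -Nb \<or> j > m"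
  shows "rhoInf_img q k Nb i j = 0"
proof -
  have s: "sc q k m = 0" using sc_zero assms(4) .
  have s': "sc' q k m = 0" using s by (simp add: sc'_def)
  show ?thesis
  proof (cases "i < 0")
    case True
    show ?thesis
    proof (cases "i = m")
      case True thus ?thesis using \<open>i<0\<close> s assms by (auto simp: rhoInf_img_def ub_def ustar_def)
    next
      case False thus ?thesis using \<open>i<0\<close> assms by (auto simp: rhoInf_img_def ub_def ustar_def)
    qed
  next
    case False
    show ?thesis
    proof (cases "i = 0")
      case True
      show ?thesis
      proof (cases "m = 0")
        case True
        hence "q powi (-k + 1) - q powi (k - 1) = 0" using c2_zero assms(4) by simp
        thus ?thesis using \<open>i=0\<close> True assms by (auto simp: rhoInf_img_def ub_def ustar_def)
      next
        case False thus ?thesis using \<open>i=0\<close> assms by (auto simp: rhoInf_img_def ub_def ustar_def)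
      qed
    next
      case False
      show ?thesis
      proof (cases "i = m")
        case True thus ?thesis using \<open>\<not> i<0\<close> \<open>i\<noteq>0\<close> s' assms by (auto simp: rhoInf_img_def ub_def ustar_def)
      next
        case False thus ?thesis using \<open>\<not> i<0\<close> \<open>i\<noteq>0\<close> assms by (auto simp: rhoInf_img_def ub_def ustar_def)
      qed
    qed
  qed
qed

lemma reducible_dir:
  assumes "\<not> int N dvd k"
  shows "reducible_rep Nb (rho0_img q) (rhoInf_img q k Nb)"
proof -
  obtain m where m: "-Nb \<le> m" "m < Nb" "int N dvd (2*m - k + 1)" using exists_m assms by blast
  define W where "W = {v :: int \<Rightarrow> complex. \<forall>j. (j < -Nb \<or> j > m) \<longrightarrow> v j = 0}"
  have inv: "lin_op Nb img v \<in> W" if v: "v \<in> W" and z: "\<And>i j. -Nb \<le> i \<Longrightarrow> i \<le> m \<Longrightarrow> (j < -Nb \<or> j > m) \<Longrightarrow> img i j = 0" for v :: "int \<Rightarrow> complex" and img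
  proof -
    have "lin_op Nb img v j = 0" if j: "j < -Nb \<or> j > m" for j
      unfolding lin_op_def
    proof (rule sum.neutral, rule ballI)
      fix i assume i: "i \<in> {-Nb..Nb}"
      show "v i * img i j = 0"
      proof (cases "i \<le> m")
        case True thus ?thesis using z[of i j] i j by simp
      next
        case False thus ?thesis using v unfolding W_def by auto
      qed
    qed
    thus ?thesis unfolding W_def by auto
  qed
  show ?thesis unfolding reducible_rep_def
  proof (intro exI[of _ W] conjI ballI)
    show "W \<subseteq> Vsp Nb" using m unfolding W_def Vsp_def by auto
    show "is_lin_subspace W" unfolding is_lin_subspace_def W_def by auto
    have "ub (-Nb) \<in> W" using m unfolding W_def ub_def by auto
    moreover have "ub (-Nb) \<noteq> (\<lambda>j. 0)" unfolding ub_def by (metis zero_neq_one)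
    ultimately show "W \<noteq> {\<lambda>j. 0}" by auto
    have "ub Nb \<in> Vsp Nb" unfolding Vsp_def ub_def using m by auto
    moreover have "ub Nb \<notin> W" using m unfolding W_def ub_def by auto
    ultimately show "W \<noteq> Vsp Nb" by auto
  next
    fix v assume "v \<in> W"
    thus "lin_op Nb (rho0_img q) v \<in> W" using inv rho0_zero m by (meson less_imp_le)
  next
    fix v assume "v \<in> W"
    thus "lin_op Nb (rhoInf_img q k Nb) v \<in> W" using inv rhoInf_zero m by blast
  qed
qed

end


context qset begin

lemma ndvd_small: "0 < \<bar>e\<bar> \<Longrightarrow> \<bar>e\<bar> < int N \<Longrightarrow> \<not> int N dvd e"
  using dvd_small by fastforce

lemma negne: "\<not> int N dvd e \<Longrightarrow> q powi e \<noteq> q powi (-e)"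
  using negeq by simp

lemma sc_nz:
  assumes k: "int N dvd k" and i: "-Nb \<le> i" "i \<le> Nb - 1" "i \<noteq> 0"
  shows "sc q k i \<noteq> 0"
proof -
  have NN: "int N = 2*Nb+1" using Nb1 by simp
  have "\<not> int N dvd (2*i+1)" using i NN by (intro ndvd_small) auto
  hence "\<not> int N dvd (2*i - k + 1)"
  proof (rule contrapos_nn)
    assume "int N dvd (2*i - k + 1)"
    from dvd_add[OF this k] show "int N dvd (2*i+1)" by simp
  qed
  hence n1: "q powi (2*i - k + 1) \<noteq> q powi (-(2*i - k + 1))" by (rule negne)
  have "\<not> int N dvd (2*i)" using i NN by (intro ndvd_small) auto
  hence n2: "q powi (2*i) \<noteq> q powi (-(2*i))" by (rule negne)
  have e: "-(2*i - k + 1) = -2*i + k - 1" "-(2*i) = -2*i" by simp_all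
  show ?thesis using n1 n2 unfolding sc_def e by simp
qed

lemma ratio_nz:
  assumes i: "1 \<le> i" "i \<le> Nb - 1"
  shows "(q powi (2*i + 2) - q powi (-2*i - 2)) / (q powi (2*i) - q powi (-2*i)) \<noteq> 0"
proof -
  have NN: "int N = 2*Nb+1" using Nb1 by simp
  have "\<not> int N dvd (2*i+2)" using i NN by (intro ndvd_small) auto
  hence n1: "q powi (2*i+2) \<noteq> q powi (-(2*i+2))" by (rule negne)
  have "\<not> int N dvd (2*i)" using i NN by (intro ndvd_small) auto
  hence n2: "q powi (2*i) \<noteq> q powi (-(2*i))" by (rule negne)
  have e: "-(2*i+2) = -2*i - 2" "-(2*i) = -2*i" by simp_all
  show ?thesis using n1 n2 unfolding e by simp
qed

lemma c2_nz:
  assumes k: "int N dvd k"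
  shows "(q powi 2 - q powi (-2)) * (q powi (-k + 1) - q powi (k - 1)) \<noteq> 0"
proof -
  have "\<not> int N dvd 2" using N3 by (intro ndvd_small) auto
  hence n1: "q powi 2 \<noteq> q powi (-2)" using negne by fastforce
  have "\<not> int N dvd (-k+1)"
  proof
    assume "int N dvd (-k+1)"
    from dvd_add[OF this k] have "int N dvd 1" by simp
    hence "N = 1" by simp
    thus False using N3 by simp
  qed
  hence n2: "q powi (-k+1) \<noteq> q powi (-(-k+1))" by (rule negne)
  have e: "-(-k+1) = k - 1" by simp
  show ?thesis using n1 n2 unfolding e by simp
qed

end


lemma frac00: "(1/(D::complex)) * x + (-y/D) = (x - y)/D"
  by (simp add: diff_divide_distrib)
lemma frac0: "(D::complex) \<noteq> 0 \<Longrightarrow> D = x - y \<Longrightarrow> (1/D) * x + (-y/D) = 1"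
  using frac00[of D x y] by simp
lemma frac1: "(\<alpha>::complex) \<noteq> 0 \<Longrightarrow> la \<noteq> lb \<Longrightarrow> (1/(\<alpha>*(la-lb))) * (\<alpha>*la) + (-lb/(\<alpha>*(la-lb))) * \<alpha> = 1"
  using frac0[of "\<alpha>*(la-lb)" "\<alpha>*la" "lb*\<alpha>"] by (simp add: algebra_simps)

locale irr = qset +
  fixes k :: int and W :: "(int \<Rightarrow> complex) set"
  assumes kdvd: "int N dvd k" and Wsub: "W \<subseteq> Vsp Nb" and Wlin: "is_lin_subspace W"
  and AW: "\<And>v. v \<in> W \<Longrightarrow> lin_op Nb (rho0_img q) v \<in> W"
  and BW: "\<And>v. v \<in> W \<Longrightarrow> lin_op Nb (rhoInf_img q k Nb) v \<in> W"
begin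

lemma A_ub_neg: "-Nb \<le> i \<Longrightarrow> i \<le> 0 \<Longrightarrow> lin_op Nb (rho0_img q) (ub i) = (\<lambda>j. lam q i * ub i j)"
  using Nb1 by (simp add: lin_op_ub rho0_img_def)

lemma A_ub_pos: "0 < i \<Longrightarrow> i \<le> Nb \<Longrightarrow> lin_op Nb (rho0_img q) (ub i) = (\<lambda>j. lam q i * ub i j + ub (-i) j)"
  by (simp add: lin_op_ub rho0_img_def)

lemma elim2:
  assumes a: "-Nb \<le> a" "a \<le> 0" and b: "-Nb \<le> b" "b \<le> 0" and l: "lam q a \<noteq> lam q b" and al: "\<alpha> \<noteq> 0"
    and y: "(\<lambda>j. \<alpha> * ub a j + \<beta> * ub b j) \<in> W"
  shows "ub a \<in> W"
proof -
  let ?y = "\<lambda>j. \<alpha> * ub a j + \<beta> * ub b j"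
  have Ay: "lin_op Nb (rho0_img q) ?y = (\<lambda>j. \<alpha> * (lam q a * ub a j) + \<beta> * (lam q b * ub b j))"
    unfolding lin_op_comb using a b by (simp add: A_ub_neg)
  have "lin_op Nb (rho0_img q) ?y \<in> W" using AW y by blast
  hence "(\<lambda>j. (1/(\<alpha>*(lam q a - lam q b))) * lin_op Nb (rho0_img q) ?y j + (- lam q b/(\<alpha>*(lam q a - lam q b))) * ?y j) \<in> W"
    using sub_comb[OF Wlin _ y] by blast
  also have "(\<lambda>j. (1/(\<alpha>*(lam q a - lam q b))) * lin_op Nb (rho0_img q) ?y j + (- lam q b/(\<alpha>*(lam q a - lam q b))) * ?y j) = ub a"
  proof (rule ext)
    fix j
    have ab: "a \<noteq> b" using l by auto
    have d: "lam q a - lam q b \<noteq> 0" using l by simp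
    show "(1/(\<alpha>*(lam q a - lam q b))) * lin_op Nb (rho0_img q) ?y j + (- lam q b/(\<alpha>*(lam q a - lam q b))) * ?y j = ub a j"
    proof (cases "j = a")
      case True thus ?thesis unfolding Ay using ab frac1[OF al l] by (simp add: ub_def)
    next
      case False
      thus ?thesis unfolding Ay using ab d al by (cases "j = b") (simp_all add: ub_def field_simps)
    qed
  qed
  finally show ?thesis .
qed

lemma elim_pair:
  assumes p: "1 \<le> p" "p \<le> Nb" and be: "\<beta> \<noteq> 0"
    and y: "(\<lambda>j. \<alpha> * ub (-p) j + \<beta> * ub p j) \<in> W"
  shows "ub (-p) \<in> W"
proof -
  let ?y = "\<lambda>j. \<alpha> * ub (-p) j + \<beta> * ub p j"
  have Ay: "lin_op Nb (rho0_img q) ?y = (\<lambda>j. \<alpha> * (lam q p * ub (-p) j) + \<beta> * (lam q p * ub p j + ub (-p) j))"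
    unfolding lin_op_comb using p by (simp add: A_ub_neg A_ub_pos lam_neg)
  have "lin_op Nb (rho0_img q) ?y \<in> W" using AW y by blast
  hence "(\<lambda>j. (1/\<beta>) * lin_op Nb (rho0_img q) ?y j + (- lam q p/\<beta>) * ?y j) \<in> W"
    using sub_comb[OF Wlin _ y] by blast
  also have "(\<lambda>j. (1/\<beta>) * lin_op Nb (rho0_img q) ?y j + (- lam q p/\<beta>) * ?y j) = ub (-p)"
  proof (rule ext)
    fix j
    have pp: "p \<noteq> -p" using p by simp
    show "(1/\<beta>) * lin_op Nb (rho0_img q) ?y j + (- lam q p/\<beta>) * ?y j = ub (-p) j"
      unfolding Ay using pp be by (auto simp: ub_def field_simps)
  qed
  finally show ?thesis .
qed

lemma up:
  assumes i: "-Nb \<le> i" "i \<le> -1" and u: "ub i \<in> W"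
  shows "ub (i+1) \<in> W"
proof -
  define c where "c = (if i - 1 < -Nb then -Nb else i - 1)"
  have us: "ustar Nb (i-1) = ub c" unfolding ustar_def c_def using i by auto
  have c: "-Nb \<le> c" "c \<le> 0" "c \<le> i" using i Nb1 unfolding c_def by auto
  have "lin_op Nb (rhoInf_img q k Nb) (ub i) \<in> W" using BW u by blast
  also have "lin_op Nb (rhoInf_img q k Nb) (ub i) = (\<lambda>j. sc q k i * ub (i+1) j + sc q k (-i) * ub c j)"
    using i Nb1 by (simp add: lin_op_ub rhoInf_img_def us)
  finally have y: "(\<lambda>j. sc q k i * ub (i+1) j + sc q k (-i) * ub c j) \<in> W" .
  have "lam q (i+1) \<noteq> lam q c"
  proof
    assume "lam q (i+1) = lam q c"
    hence "i + 1 = c \<or> i + 1 = -c" using lam_inj[of "i+1" c] i c by auto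
    thus False using c i Nb1 unfolding c_def by (auto split: if_splits)
  qed
  moreover have "sc q k i \<noteq> 0" using sc_nz[OF kdvd] i by simp
  ultimately show ?thesis using elim2[OF _ _ c(1,2) _ _ y] i by simp
qed

lemma down:
  assumes i: "-Nb + 1 \<le> i" "i \<le> -1" and u: "ub i \<in> W"
  shows "ub (i-1) \<in> W"
proof -
  have us: "ustar Nb (i-1) = ub (i-1)" unfolding ustar_def using i by auto
  have "lin_op Nb (rhoInf_img q k Nb) (ub i) \<in> W" using BW u by blast
  also have "lin_op Nb (rhoInf_img q k Nb) (ub i) = (\<lambda>j. sc q k (-i) * ub (i-1) j + sc q k i * ub (i+1) j)"
    using i Nb1 by (auto simp: lin_op_ub rhoInf_img_def us)
  finally have y: "(\<lambda>j. sc q k (-i) * ub (i-1) j + sc q k i * ub (i+1) j) \<in> W" .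
  have "lam q (i-1) \<noteq> lam q (i+1)"
  proof
    assume "lam q (i-1) = lam q (i+1)"
    hence "i - 1 = i + 1 \<or> i - 1 = -(i+1)" using lam_inj[of "i-1" "i+1"] i by auto
    thus False using i by auto
  qed
  moreover have "sc q k (-i) \<noteq> 0" using sc_nz[OF kdvd] i by simp
  ultimately show ?thesis using elim2[OF _ _ _ _ _ _ y] i by simp
qed

lemma B_ub0: "lin_op Nb (rhoInf_img q k Nb) (ub 0) = (\<lambda>j. (q powi (k - 1) + q powi (-k + 1)) * ub (-1) j
                + (q powi 2 - q powi (-2)) * (q powi (-k + 1) - q powi (k - 1)) * ub 1 j)"
  using Nb1 by (simp add: lin_op_ub rhoInf_img_def)

lemma down0: assumes "ub 0 \<in> W" shows "ub (-1) \<in> W"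
proof -
  have y: "(\<lambda>j. (q powi (k - 1) + q powi (-k + 1)) * ub (-1) j
                + (q powi 2 - q powi (-2)) * (q powi (-k + 1) - q powi (k - 1)) * ub 1 j) \<in> W"
    using BW[OF assms] B_ub0 by simp
  show ?thesis using elim_pair[OF _ _ c2_nz[OF kdvd] y] Nb1 by simp
qed

lemma pos1: assumes "ub 0 \<in> W" "ub (-1) \<in> W" shows "ub 1 \<in> W"
proof -
  define c1 where "c1 = q powi (k - 1) + q powi (-k + 1)"
  define c2 where "c2 = (q powi 2 - q powi (-2)) * (q powi (-k + 1) - q powi (k - 1))"
  have c2: "c2 \<noteq> 0" using c2_nz[OF kdvd] c2_def by simp
  have y: "(\<lambda>j. c1 * ub (-1) j + c2 * ub 1 j) \<in> W" using BW[OF assms(1)] B_ub0 c1_def c2_def by simp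
  have "(\<lambda>j. (1/c2) * (c1 * ub (-1) j + c2 * ub 1 j) + (-c1/c2) * ub (-1) j) \<in> W"
    using sub_comb[OF Wlin y assms(2)] by blast
  also have "(\<lambda>j. (1/c2) * (c1 * ub (-1) j + c2 * ub 1 j) + (-c1/c2) * ub (-1) j) = ub 1"
    using c2 by (auto simp: field_simps)
  finally show ?thesis .
qed

lemma posstep:
  assumes i: "1 \<le> i" "i \<le> Nb - 1" and u: "ub (-i-1) \<in> W" "ub (-i+1) \<in> W" "ub (i-1) \<in> W" "ub i \<in> W"
  shows "ub (i+1) \<in> W"
proof -
  define b where "b = beta q k i"
  define s where "s = sc' q k i"
  define t where "t = sc' q k (-i)"
  have s: "s \<noteq> 0" using ratio_nz[OF i] sc_nz[OF kdvd, of i] i unfolding s_def sc'_def by simp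
  have us: "ustar Nb (-i-1) = ub (-i-1)" "ustar Nb (i+1) = ub (i+1)" unfolding ustar_def using i by auto
  have "lin_op Nb (rhoInf_img q k Nb) (ub i) \<in> W" using BW u by blast
  also have "lin_op Nb (rhoInf_img q k Nb) (ub i) = (\<lambda>j. b * ub (-i-1) j - b * ub (-i+1) j + t * ub (i-1) j + s * ub (i+1) j)"
    using i Nb1 by (simp add: lin_op_ub rhoInf_img_def us b_def s_def t_def)
  finally have y: "(\<lambda>j. b * ub (-i-1) j - b * ub (-i+1) j + t * ub (i-1) j + s * ub (i+1) j) \<in> W" .
  have "(\<lambda>j. (1/s) * (b * ub (-i-1) j - b * ub (-i+1) j + t * ub (i-1) j + s * ub (i+1) j)
     + (-b/s) * ub (-i-1) j + (b/s) * ub (-i+1) j + (-t/s) * ub (i-1) j) \<in> W"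
    by (rule sub_comb4[OF Wlin y u(1,2,3)])
  also have "(\<lambda>j. (1/s) * (b * ub (-i-1) j - b * ub (-i+1) j + t * ub (i-1) j + s * ub (i+1) j)
     + (-b/s) * ub (-i-1) j + (b/s) * ub (-i+1) j + (-t/s) * ub (i-1) j) = ub (i+1)"
    using s by (auto simp: field_simps)
  finally show ?thesis .
qed

end


context irr begin

lemma neg_all:
  assumes a: "-Nb \<le> a" "a \<le> 0" "ub a \<in> W" and b: "-Nb \<le> b" "b \<le> 0"
  shows "ub b \<in> W"
proof -
  have U: "a + int d \<le> 0 \<longrightarrow> ub (a + int d) \<in> W" for d :: nat
  proof (induction d)
    case 0 thus ?case using a by simp
  next
    case (Suc d)
    show ?case
    proof
      assume h: "a + int (Suc d) \<le> 0"
      hence "ub (a + int d) \<in> W" using Suc by simp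
      hence "ub (a + int d + 1) \<in> W" using up[of "a + int d"] h a by simp
      moreover have "a + int d + 1 = a + int (Suc d)" by simp
      ultimately show "ub (a + int (Suc d)) \<in> W" by metis
    qed
  qed
  have D: "-Nb \<le> a - int d \<longrightarrow> ub (a - int d) \<in> W" for d :: nat
  proof (induction d)
    case 0 thus ?case using a by simp
  next
    case (Suc d)
    show ?case
    proof
      assume h: "-Nb \<le> a - int (Suc d)"
      hence u: "ub (a - int d) \<in> W" using Suc by simp
      have "ub (a - int d - 1) \<in> W"
      proof (cases "a - int d = 0")
        case True thus ?thesis using down0 u by simp
      next
        case False thus ?thesis using down[of "a - int d"] h a u by simp
      qed
      thus "ub (a - int (Suc d)) \<in> W" by (simp add: algebra_simps)
    qed
  qed
  show ?thesis
  proof (cases "a \<le> b")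
    case True thus ?thesis using U[of "nat (b - a)"] b by simp
  next
    case False thus ?thesis using D[of "nat (a - b)"] b by simp
  qed
qed

lemma all_ub:
  assumes negs: "\<And>b. -Nb \<le> b \<Longrightarrow> b \<le> 0 \<Longrightarrow> ub b \<in> W"
  shows "\<And>l. -Nb \<le> l \<Longrightarrow> l \<le> Nb \<Longrightarrow> ub l \<in> W"
proof -
  have S: "int d + 1 \<le> Nb \<longrightarrow> (\<forall>l. -Nb \<le> l \<and> l \<le> int d + 1 \<longrightarrow> ub l \<in> W)" for d :: nat
  proof (induction d)
    case 0
    have "ub 1 \<in> W" using pos1 negs Nb1 by simp
    thus ?case using negs by (auto simp: order_le_less) (metis int_one_le_iff_zero_less not_less zless_imp_add1_zle add_0 order.antisym)
  next
    case (Suc d)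
    show ?case
    proof (intro impI allI)
      fix l assume h: "int (Suc d) + 1 \<le> Nb" and l: "-Nb \<le> l \<and> l \<le> int (Suc d) + 1"
      have IH: "\<forall>l. -Nb \<le> l \<and> l \<le> int d + 1 \<longrightarrow> ub l \<in> W" using Suc h by simp
      show "ub l \<in> W"
      proof (cases "l \<le> int d + 1")
        case True thus ?thesis using IH l by simp
      next
        case False
        hence ll: "l = (int d + 1) + 1" using l by simp
        have "ub ((int d + 1) + 1) \<in> W"
          by (rule posstep) (use h IH Nb1 in auto)
        thus ?thesis using ll by simp
      qed
    qed
  qed
  fix l assume l: "-Nb \<le> l" "l \<le> Nb"
  show "ub l \<in> W"
  proof (cases "l \<le> 0")
    case True thus ?thesis using negs l by simp
  next
    case False
    thus ?thesis using S[of "nat (Nb - 1)"] l Nb1 by simp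
  qed
qed

end


definition Dop :: "int \<Rightarrow> complex \<Rightarrow> complex \<Rightarrow> (int \<Rightarrow> complex) \<Rightarrow> int \<Rightarrow> complex" where
  "Dop Nb q mu x = (\<lambda>j. lin_op Nb (rho0_img q) x j - mu * x j)"

lemma Dop_formula:
  assumes "x \<in> Vsp Nb"
  shows "Dop Nb q mu x j = (if -Nb \<le> j \<and> j \<le> Nb then (lam q j - mu) * x j + (if j < 0 then x (-j) else 0) else 0)"
  using assms unfolding Dop_def rho0_formula Vsp_def by (auto simp: algebra_simps)

lemma Dop_Vsp: "x \<in> Vsp Nb \<Longrightarrow> Dop Nb q mu x \<in> Vsp Nb"
  using Dop_formula[of x Nb q mu] unfolding Vsp_def by auto

context irr begin

lemma Dop_W: assumes x: "x \<in> W" shows "Dop Nb q mu x \<in> W"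
proof -
  have "(\<lambda>j. 1 * lin_op Nb (rho0_img q) x j + (-mu) * x j) \<in> W" by (rule sub_comb[OF Wlin AW[OF x] x])
  thus ?thesis unfolding Dop_def by simp
qed

lemma eig:
  assumes m: "0 \<le> m" "m \<le> Nb" and x: "x \<in> Vsp Nb" and D: "Dop Nb q (lam q m) x = (\<lambda>j. 0)"
  shows "\<forall>j. j \<noteq> -m \<longrightarrow> x j = 0"
proof -
  have F: "(lam q j - lam q m) * x j + (if j < 0 then x (-j) else 0) = 0" if "-Nb \<le> j" "j \<le> Nb" for j
    using fun_cong[OF D, of j] Dop_formula[OF x, of q "lam q m" j] that by simp
  have neq: "lam q j \<noteq> lam q m" if "-Nb \<le> j" "j \<le> Nb" "j \<noteq> m" "j \<noteq> -m" for j
    using lam_inj[of j m] that m by auto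
  have pos: "x p = 0" if "0 < p" "p \<le> Nb" for p
  proof (cases "p = m")
    case True
    have "(lam q (-m) - lam q m) * x (-m) + x m = 0" using F[of "-m"] that True by simp
    thus ?thesis using True by (simp add: lam_neg)
  next
    case False
    have "(lam q p - lam q m) * x p = 0" using F[of p] that by simp
    thus ?thesis using neq[of p] that False m by auto
  qed
  show ?thesis
  proof (intro allI impI)
    fix j assume j: "j \<noteq> -m"
    show "x j = 0"
    proof (cases "-Nb \<le> j \<and> j \<le> Nb")
      case False thus ?thesis using x unfolding Vsp_def by auto
    next
      case True
      show ?thesis
      proof (cases "0 < j")
        case True thus ?thesis using pos \<open>-Nb \<le> j \<and> j \<le> Nb\<close> by simp
      next
        case False
        have "x (-j) = 0 \<or> j = 0" using pos[of "-j"] False True by auto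
        hence "(if j < 0 then x (-j) else 0) = 0" by auto
        hence "(lam q j - lam q m) * x j = 0" using F[of j] True by simp
        moreover have "j \<noteq> m" using j False m by auto
        hence "lam q j \<noteq> lam q m" using neq[of j] True j by auto
        ultimately show ?thesis by simp
      qed
    qed
  qed
qed

lemma Pstep:
  assumes m: "1 \<le> m" "m \<le> Nb" and x: "x \<in> Vsp Nb" and sup: "\<forall>j. m < \<bar>j\<bar> \<longrightarrow> x j = 0"
  shows "\<forall>j. m - 1 < \<bar>j\<bar> \<longrightarrow> Dop Nb q (lam q m) (Dop Nb q (lam q m) x) j = 0"
proof -
  define y where "y = Dop Nb q (lam q m) x"
  have y: "y \<in> Vsp Nb" using Dop_Vsp x y_def by simp
  have ysup: "\<forall>j. m < \<bar>j\<bar> \<longrightarrow> y j = 0"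
    using sup unfolding y_def Dop_formula[OF x] by auto
  have ym: "y m = 0" unfolding y_def Dop_formula[OF x] using m by simp
  have ymm: "y (-m) = x m" unfolding y_def Dop_formula[OF x] using m by (simp add: lam_neg)
  show ?thesis unfolding y_def[symmetric]
  proof (intro allI impI)
    fix j assume j: "m - 1 < \<bar>j\<bar>"
    show "Dop Nb q (lam q m) y j = 0"
    proof (cases "m < \<bar>j\<bar>")
      case True thus ?thesis using ysup unfolding Dop_formula[OF y] by auto
    next
      case False
      hence "j = m \<or> j = -m" using j by auto
      thus ?thesis
      proof
        assume "j = m" thus ?thesis unfolding Dop_formula[OF y] using m ym by simp
      next
        assume "j = -m" thus ?thesis unfolding Dop_formula[OF y] using m ym ymm by (simp add: lam_neg)
      qed
    qed
  qed
qed

lemma sing: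
  assumes x: "x \<in> W" "x \<noteq> (\<lambda>j. 0)" and s: "\<forall>j. j \<noteq> a \<longrightarrow> x j = 0"
  shows "ub a \<in> W"
proof -
  have xa: "x a \<noteq> 0" using x(2) s by (metis ext)
  have "(\<lambda>j. (1 / x a) * x j) \<in> W" by (rule sub_smult[OF Wlin x(1)])
  also have "(\<lambda>j. (1 / x a) * x j) = ub a" using xa s by (auto simp: ub_def)
  finally show ?thesis .
qed

lemma find_eig:
  "int m' \<le> Nb \<longrightarrow> (\<forall>x. x \<in> W \<longrightarrow> x \<noteq> (\<lambda>j. 0) \<longrightarrow> (\<forall>j. int m' < \<bar>j\<bar> \<longrightarrow> x j = 0) \<longrightarrow> (\<exists>j. 0 \<le> j \<and> j \<le> Nb \<and> ub (-j) \<in> W))"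
proof (induction m')
  case 0
  show ?case
  proof (intro impI allI)
    fix x assume x: "x \<in> W" "x \<noteq> (\<lambda>j. 0)" "\<forall>j. int 0 < \<bar>j\<bar> \<longrightarrow> x j = 0"
    have "ub 0 \<in> W" by (rule sing[OF x(1,2)]) (use x(3) in auto)
    thus "\<exists>j. 0 \<le> j \<and> j \<le> Nb \<and> ub (-j) \<in> W" using Nb1 by (intro exI[of _ 0]) auto
  qed
next
  case (Suc m')
  show ?case
  proof (intro impI allI)
    fix x assume h: "int (Suc m') \<le> Nb" and x: "x \<in> W" "x \<noteq> (\<lambda>j. 0)" "\<forall>j. int (Suc m') < \<bar>j\<bar> \<longrightarrow> x j = 0"
    define m where "m = int (Suc m')"
    have m: "1 \<le> m" "m \<le> Nb" using h m_def by auto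
    have xV: "x \<in> Vsp Nb" using x Wsub by auto
    define y where "y = Dop Nb q (lam q m) x"
    define z where "z = Dop Nb q (lam q m) y"
    have yW: "y \<in> W" and zW: "z \<in> W" using Dop_W x y_def z_def by auto
    have yV: "y \<in> Vsp Nb" using Dop_Vsp xV y_def by simp
    have zs: "\<forall>j. int m' < \<bar>j\<bar> \<longrightarrow> z j = 0" using Pstep[OF m xV] x(3) unfolding z_def y_def m_def by simp
    show "\<exists>j. 0 \<le> j \<and> j \<le> Nb \<and> ub (-j) \<in> W"
    proof (cases "z = (\<lambda>j. 0)")
      case False thus ?thesis using Suc.IH h zW zs by simp
    next
      case zT: True
      show ?thesis
      proof (cases "y = (\<lambda>j. 0)")
        case False
        have "Dop Nb q (lam q m) y = (\<lambda>j. 0)" using zT z_def by simp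
        hence "\<forall>j. j \<noteq> -m \<longrightarrow> y j = 0" using eig[of m y] yV m by simp
        hence "ub (-m) \<in> W" by (rule sing[OF yW False])
        thus ?thesis using m by (intro exI[of _ m]) auto
      next
        case True
        have "Dop Nb q (lam q m) x = (\<lambda>j. 0)" using True y_def by simp
        hence "\<forall>j. j \<noteq> -m \<longrightarrow> x j = 0" using eig[of m x] xV m by simp
        hence "ub (-m) \<in> W" by (rule sing[OF x(1,2)])
        thus ?thesis using m by (intro exI[of _ m]) auto
      qed
    qed
  qed
qed

lemma contra:
  assumes "W \<noteq> {\<lambda>j. 0}" shows "W = Vsp Nb"
proof -
  have "(\<lambda>j. 0) \<in> W" using Wlin unfolding is_lin_subspace_def by simp
  then obtain x where x: "x \<in> W" "x \<noteq> (\<lambda>j. 0)" using assms by blast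
  have xV: "x \<in> Vsp Nb" using x Wsub by auto
  have "\<forall>j. int (nat Nb) < \<bar>j\<bar> \<longrightarrow> x j = 0" using xV Nb1 unfolding Vsp_def by (auto simp: abs_if)
  then obtain j0 where j0: "0 \<le> j0" "j0 \<le> Nb" "ub (-j0) \<in> W"
    using find_eig[of "nat Nb"] x Nb1 by auto
  have negs: "\<And>b. -Nb \<le> b \<Longrightarrow> b \<le> 0 \<Longrightarrow> ub b \<in> W" using neg_all[of "-j0"] j0 by simp
  have all: "\<forall>l\<in>{-Nb..Nb}. ub l \<in> W" using all_ub[OF negs] by simp
  have "Vsp Nb \<subseteq> W"
  proof
    fix v assume v: "v \<in> Vsp Nb"
    have "(\<lambda>j. \<Sum>i\<in>{-Nb..Nb}. v i * ub i j) \<in> W" by (rule sub_sum[OF Wlin]) (use all in auto)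
    thus "v \<in> W" using Vsp_decomp[OF v] by simp
  qed
  thus ?thesis using Wsub by auto
qed

end

context qset begin
lemma irreducible_dir:
  assumes "int N dvd k"
  shows "\<not> reducible_rep Nb (rho0_img q) (rhoInf_img q k Nb)"
proof
  assume "reducible_rep Nb (rho0_img q) (rhoInf_img q k Nb)"
  then obtain W where W: "W \<subseteq> Vsp Nb" "is_lin_subspace W" "W \<noteq> {\<lambda>j. 0}" "W \<noteq> Vsp Nb"
      "\<forall>v\<in>W. lin_op Nb (rho0_img q) v \<in> W" "\<forall>v\<in>W. lin_op Nb (rhoInf_img q k Nb) v \<in> W"
    unfolding reducible_rep_def by blast
  interpret irr q N Nb k W using W assms by unfold_locales auto
  show False using contra W by simp
qed
end


theorem mainTheorem12:
  fixes q :: complex and k :: int and n N :: nat and Nb :: int and w :: complex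
  assumes "\<exists>m>0. q ^ m = (1::complex)"
    and "n = mult_ord (q ^ 2)" and "N = mult_ord (q ^ 4)"
    and "odd n" and "q ^ 4 \<noteq> 1"
    and "Nb = (int N - 1) div 2"
    and "w = - (q powi (2*k)) - q powi (-2*k)"
  shows "reducible_rep Nb (rho0_img q) (rhoInf_img q k Nb) \<longleftrightarrow> w \<noteq> -2"
proof -
  interpret qset q N Nb by (rule q_setup[OF assms(1-6)])
  have "w = -2 \<longleftrightarrow> int N dvd k" using w_iff assms(7) by simp
  thus ?thesis using reducible_dir irreducible_dir by blast
qed

end
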